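(* Let $(L,b)$ and $(M,b)$ be cochain complexes of vector spaces, and let $i:(L,b)\to(M,b)$, $p:(M,b)\to(L,b)$ be quasi-isomorphisms (cochain maps inducing isomorphisms in cohomology) with $ip=1$. Let $\delta:M\to M$ be a linear map of degree $+1$ with $(b+\delta)^2=0$. Then $(b+p\delta i)^2=0$ on $L$, and $i:(L,b+p\delta i)\to(M,b+\delta)$ and $p:(M,b+\delta)\to(L,b+p\delta i)$ are quasi-isomorphisms (cochain maps) satisfying $ip=1$.
   Context: All maps are linear. *)

theory Defs
  imports Complex_Main
begin

text \<open>A graded vector space over a field 'k is modelled as a family of subspaces
  V n (n :: int) of an ambient vector space of type 'v with scalar multiplication sc.
  Maps between graded spaces are degree-indexed families of functions; the component
  in degree n is only required to be linear on V n.\<close>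

definition lin_on :: "('k::field \<Rightarrow> 'a::ab_group_add \<Rightarrow> 'a) \<Rightarrow> ('k \<Rightarrow> 'b::ab_group_add \<Rightarrow> 'b)
    \<Rightarrow> 'a set \<Rightarrow> 'b set \<Rightarrow> ('a \<Rightarrow> 'b) \<Rightarrow> bool" where
  "lin_on sA sB A B f \<longleftrightarrow>
     (\<forall>x\<in>A. f x \<in> B) \<and>
     (\<forall>x\<in>A. \<forall>y\<in>A. f (x + y) = f x + f y) \<and>
     (\<forall>c. \<forall>x\<in>A. f (sA c x) = sB c (f x))"

definition cochain_complex :: "('k::field \<Rightarrow> 'v::ab_group_add \<Rightarrow> 'v) \<Rightarrow> (int \<Rightarrow> 'v set)
    \<Rightarrow> (int \<Rightarrow> 'v \<Rightarrow> 'v) \<Rightarrow> bool" where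
  "cochain_complex sc V d \<longleftrightarrow>
     vector_space sc \<and>
     (\<forall>n. module.subspace sc (V n)) \<and>
     (\<forall>n. lin_on sc sc (V n) (V (n + 1)) (d n)) \<and>
     (\<forall>n. \<forall>x\<in>V n. d (n + 1) (d n x) = 0)"

definition cochain_map :: "('k::field \<Rightarrow> 'v::ab_group_add \<Rightarrow> 'v) \<Rightarrow> (int \<Rightarrow> 'v set) \<Rightarrow> (int \<Rightarrow> 'v \<Rightarrow> 'v)
    \<Rightarrow> ('k \<Rightarrow> 'w::ab_group_add \<Rightarrow> 'w) \<Rightarrow> (int \<Rightarrow> 'w set) \<Rightarrow> (int \<Rightarrow> 'w \<Rightarrow> 'w)
    \<Rightarrow> (int \<Rightarrow> 'v \<Rightarrow> 'w) \<Rightarrow> bool" where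
  "cochain_map sV V dV sW W dW f \<longleftrightarrow>
     (\<forall>n. lin_on sV sW (V n) (W n) (f n)) \<and>
     (\<forall>n. \<forall>x\<in>V n. f (n + 1) (dV n x) = dW n (f n x))"

text \<open>The map induced by a cochain map on H(n) = ker d n / im d (n-1) is bijective
  (injective and surjective on cohomology classes), written out on representatives.\<close>
definition cohom_iso :: "(int \<Rightarrow> 'v::ab_group_add set) \<Rightarrow> (int \<Rightarrow> 'v \<Rightarrow> 'v)
    \<Rightarrow> (int \<Rightarrow> 'w::ab_group_add set) \<Rightarrow> (int \<Rightarrow> 'w \<Rightarrow> 'w) \<Rightarrow> (int \<Rightarrow> 'v \<Rightarrow> 'w) \<Rightarrow> int \<Rightarrow> bool" where
  "cohom_iso V dV W dW f n \<longleftrightarrow>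
     (\<forall>x\<in>V n. dV n x = 0 \<longrightarrow> f n x \<in> dW (n - 1) ` W (n - 1) \<longrightarrow> x \<in> dV (n - 1) ` V (n - 1)) \<and>
     (\<forall>y\<in>W n. dW n y = 0 \<longrightarrow> (\<exists>x\<in>V n. dV n x = 0 \<and> y - f n x \<in> dW (n - 1) ` W (n - 1)))"

definition quasi_iso :: "('k::field \<Rightarrow> 'v::ab_group_add \<Rightarrow> 'v) \<Rightarrow> (int \<Rightarrow> 'v set) \<Rightarrow> (int \<Rightarrow> 'v \<Rightarrow> 'v)
    \<Rightarrow> ('k \<Rightarrow> 'w::ab_group_add \<Rightarrow> 'w) \<Rightarrow> (int \<Rightarrow> 'w set) \<Rightarrow> (int \<Rightarrow> 'w \<Rightarrow> 'w)
    \<Rightarrow> (int \<Rightarrow> 'v \<Rightarrow> 'w) \<Rightarrow> bool" where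
  "quasi_iso sV V dV sW W dW f \<longleftrightarrow>
     cochain_map sV V dV sW W dW f \<and> (\<forall>n. cohom_iso V dV W dW f n)"

end

theory Submission
  imports Defs
begin

lemma lin_zero: "lin_on sA sB A B f \<Longrightarrow> (0::'a::ab_group_add) \<in> A \<Longrightarrow> f 0 = (0::'b::ab_group_add)"
  unfolding lin_on_def by (metis add.right_neutral add_left_cancel)

lemma lin_diff: "lin_on sA sB A B f \<Longrightarrow> x \<in> A \<Longrightarrow> y \<in> A \<Longrightarrow> x - y \<in> A
   \<Longrightarrow> f (x - y) = f x - (f y :: 'b::ab_group_add)"
  unfolding lin_on_def by (metis add_diff_cancel diff_add_cancel eq_diff_eq)

lemma lin_add: "lin_on sA sB A B f \<Longrightarrow> x \<in> A \<Longrightarrow> y \<in> A \<Longrightarrow> f (x + y) = f x + f y"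
  unfolding lin_on_def by blast

lemma lin_mem: "lin_on sA sB A B f \<Longrightarrow> x \<in> A \<Longrightarrow> f x \<in> B"
  unfolding lin_on_def by blast

lemma lin_scale: "lin_on sA sB A B f \<Longrightarrow> x \<in> A \<Longrightarrow> f (sA c x) = sB c (f x)"
  unfolding lin_on_def by blast

theorem mainTheorem4:
  fixes sL :: "'k::field \<Rightarrow> 'l::ab_group_add \<Rightarrow> 'l" and L :: "int \<Rightarrow> 'l set"
    and bL :: "int \<Rightarrow> 'l \<Rightarrow> 'l"
    and sM :: "'k \<Rightarrow> 'm::ab_group_add \<Rightarrow> 'm" and M :: "int \<Rightarrow> 'm set"
    and bM :: "int \<Rightarrow> 'm \<Rightarrow> 'm"
    and i :: "int \<Rightarrow> 'l \<Rightarrow> 'm" and p :: "int \<Rightarrow> 'm \<Rightarrow> 'l"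
    and \<delta> :: "int \<Rightarrow> 'm \<Rightarrow> 'm"
  assumes cL: "cochain_complex sL L bL"
    and cM: "cochain_complex sM M bM"
    and qi: "quasi_iso sL L bL sM M bM i"
    and qp: "quasi_iso sM M bM sL L bL p"
    and ip: "\<forall>n. \<forall>y\<in>M n. i n (p n y) = y"
    and \<delta>lin: "\<forall>n. lin_on sM sM (M n) (M (n + 1)) (\<delta> n)"
    and sq: "\<forall>n. \<forall>y\<in>M n. bM (n + 1) (bM n y + \<delta> n y) + \<delta> (n + 1) (bM n y + \<delta> n y) = 0"
  shows "cochain_complex sL L (\<lambda>n x. bL n x + p (n + 1) (\<delta> n (i n x)))
       \<and> quasi_iso sL L (\<lambda>n x. bL n x + p (n + 1) (\<delta> n (i n x))) sM M (\<lambda>n y. bM n y + \<delta> n y) i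
       \<and> quasi_iso sM M (\<lambda>n y. bM n y + \<delta> n y) sL L (\<lambda>n x. bL n x + p (n + 1) (\<delta> n (i n x))) p
       \<and> (\<forall>n. \<forall>y\<in>M n. i n (p n y) = y)"
proof -
  define D where "D = (\<lambda>n x. bL n x + p (n + 1) (\<delta> n (i n x)))"
  define E where "E = (\<lambda>n y. bM n y + \<delta> n y)"
  have vL: "vector_space sL" using cL unfolding cochain_complex_def by blast
  have Ls: "\<And>n. module.subspace sL (L n)" using cL unfolding cochain_complex_def by blast
  have Ms: "\<And>n. module.subspace sM (M n)" using cM unfolding cochain_complex_def by blast
  have modL: "module sL" using vL module_iff_vector_space by blast
  have vM: "vector_space sM" using cM unfolding cochain_complex_def by blast
  have modM: "module sM" using vM module_iff_vector_space by blast
  have L0: "\<And>n. 0 \<in> L n" using Ls module.subspace_0[OF modL] by blast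
  have M0: "\<And>n. 0 \<in> M n" using Ms module.subspace_0[OF modM] by blast
  have Ldiff: "\<And>n x y. x \<in> L n \<Longrightarrow> y \<in> L n \<Longrightarrow> x - y \<in> L n"
    using Ls module.subspace_diff[OF modL] by blast
  have Mdiff: "\<And>n x y. x \<in> M n \<Longrightarrow> y \<in> M n \<Longrightarrow> x - y \<in> M n"
    using Ms module.subspace_diff[OF modM] by blast
  have Ladd: "\<And>n x y. x \<in> L n \<Longrightarrow> y \<in> L n \<Longrightarrow> x + y \<in> L n"
    using Ls module.subspace_add[OF modL] by blast
  have Madd: "\<And>n x y. x \<in> M n \<Longrightarrow> y \<in> M n \<Longrightarrow> x + y \<in> M n"
    using Ms module.subspace_add[OF modM] by blast
  have bLl: "\<And>n. lin_on sL sL (L n) (L (n + 1)) (bL n)" using cL unfolding cochain_complex_def by blast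
  have bMl: "\<And>n. lin_on sM sM (M n) (M (n + 1)) (bM n)" using cM unfolding cochain_complex_def by blast
  have bLL: "\<And>n x. x \<in> L n \<Longrightarrow> bL (n + 1) (bL n x) = 0" using cL unfolding cochain_complex_def by blast
  have bMM: "\<And>n x. x \<in> M n \<Longrightarrow> bM (n + 1) (bM n x) = 0" using cM unfolding cochain_complex_def by blast
  have il: "\<And>n. lin_on sL sM (L n) (M n) (i n)" using qi unfolding quasi_iso_def cochain_map_def by blast
  have ic: "\<And>n x. x \<in> L n \<Longrightarrow> i (n + 1) (bL n x) = bM n (i n x)" using qi unfolding quasi_iso_def cochain_map_def by blast
  have pl: "\<And>n. lin_on sM sL (M n) (L n) (p n)" using qp unfolding quasi_iso_def cochain_map_def by blast
  have pc: "\<And>n x. x \<in> M n \<Longrightarrow> p (n + 1) (bM n x) = bL n (p n x)" using qp unfolding quasi_iso_def cochain_map_def by blast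
  have qia: "\<And>n x. x \<in> L n \<Longrightarrow> bL n x = 0 \<Longrightarrow> i n x \<in> bM (n - 1) ` M (n - 1) \<Longrightarrow> x \<in> bL (n - 1) ` L (n - 1)"
    using qi unfolding quasi_iso_def cohom_iso_def by blast
  have ipn: "\<And>n y. y \<in> M n \<Longrightarrow> i n (p n y) = y" using ip by blast
  have dl: "\<And>n. lin_on sM sM (M n) (M (n + 1)) (\<delta> n)" using \<delta>lin by blast
  note mems = lin_mem[OF bLl] lin_mem[OF bMl] lin_mem[OF il] lin_mem[OF pl] lin_mem[OF dl]
  have i0: "\<And>n. i n 0 = 0" using lin_zero[OF il L0] .
  have p0: "\<And>n. p n 0 = 0" using lin_zero[OF pl M0] .
  have d0: "\<And>n. \<delta> n 0 = 0" using lin_zero[OF dl M0] .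
  have bL0: "\<And>n. bL n 0 = 0" using lin_zero[OF bLl L0] .
  have bM0: "\<And>n. bM n 0 = 0" using lin_zero[OF bMl M0] .
  have DL: "\<And>n x. x \<in> L n \<Longrightarrow> D n x \<in> L (n + 1)"
    unfolding D_def by (intro Ladd) (auto intro: mems)
  have EM: "\<And>n y. y \<in> M n \<Longrightarrow> E n y \<in> M (n + 1)"
    unfolding E_def by (intro Madd) (auto intro: mems)
  have sq': "\<And>n y. y \<in> M n \<Longrightarrow> bM (n + 1) (\<delta> n y) + \<delta> (n + 1) (bM n y) + \<delta> (n + 1) (\<delta> n y) = 0"
  proof -
    fix n y assume y: "y \<in> M n"
    have "0 = bM (n + 1) (bM n y + \<delta> n y) + \<delta> (n + 1) (bM n y + \<delta> n y)" using sq y by auto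
    also have "\<dots> = bM (n + 1) (\<delta> n y) + \<delta> (n + 1) (bM n y) + \<delta> (n + 1) (\<delta> n y)"
      using y by (simp add: lin_add[OF bMl] lin_add[OF dl] mems bMM)
    finally show "bM (n + 1) (\<delta> n y) + \<delta> (n + 1) (bM n y) + \<delta> (n + 1) (\<delta> n y) = 0" by simp
  qed
  have iD: "\<And>n x. x \<in> L n \<Longrightarrow> i (n + 1) (D n x) = E n (i n x)"
    unfolding D_def E_def by (simp add: lin_add[OF il] mems ic ipn)
  have pE: "\<And>n y. y \<in> M n \<Longrightarrow> p (n + 1) (E n y) = D n (p n y)"
    unfolding D_def E_def by (simp add: lin_add[OF pl] mems pc ipn)
  have DD: "\<And>n x. x \<in> L n \<Longrightarrow> D (n + 1) (D n x) = 0"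
  proof -
    fix n x assume x: "x \<in> L n"
    have "D (n + 1) (D n x) = bL (n + 1) (D n x) + p (n + 1 + 1) (\<delta> (n + 1) (E n (i n x)))"
      using iD[OF x] by (simp add: D_def)
    also have "\<dots> = p (n + 1 + 1) (bM (n + 1) (\<delta> n (i n x))) + p (n + 1 + 1) (\<delta> (n + 1) (bM n (i n x)) + \<delta> (n + 1) (\<delta> n (i n x)))"
      using x pc[of "\<delta> n (i n x)" "n + 1"] by (simp add: D_def E_def lin_add[OF bLl] lin_add[OF dl] mems bLL pc)
    also have "\<dots> = p (n + 1 + 1) (bM (n + 1) (\<delta> n (i n x)) + \<delta> (n + 1) (bM n (i n x)) + \<delta> (n + 1) (\<delta> n (i n x)))"
    proof -
      have m1: "bM (n+1) (\<delta> n (i n x)) \<in> M (n+1+1)" using x by (intro mems)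
      have m2: "\<delta> (n + 1) (bM n (i n x)) + \<delta> (n + 1) (\<delta> n (i n x)) \<in> M (n+1+1)"
        using x by (intro Madd mems)
      show ?thesis using lin_add[OF pl m1 m2] by (metis add.assoc)
    qed
    also have "\<dots> = 0" using sq' x by (simp add: mems p0)
    finally show "D (n + 1) (D n x) = 0" .
  qed
  have DLl: "\<And>n. lin_on sL sL (L n) (L (n + 1)) (D n)"
  proof -
    fix n
    show "lin_on sL sL (L n) (L (n + 1)) (D n)"
      unfolding lin_on_def
    proof (intro conjI ballI allI)
      fix x assume "x \<in> L n" thus "D n x \<in> L (n + 1)" by (rule DL)
    next
      fix x y assume x: "x \<in> L n" and y: "y \<in> L n"
      have xy: "x + y \<in> L n" using Ladd x y .
      show "D n (x + y) = D n x + D n y"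
        unfolding D_def using x y xy
        by (simp add: lin_add[OF bLl] lin_add[OF il] lin_add[OF dl] lin_add[OF pl] mems Madd)
    next
      fix c x assume x: "x \<in> L n"
      have sx: "sL c x \<in> L n" using Ls x module.subspace_scale[OF modL] by blast
      have "D n (sL c x) = sL c (bL n x) + sL c (p (n + 1) (\<delta> n (i n x)))"
        unfolding D_def using x by (simp add: lin_scale[OF bLl] lin_scale[OF il] lin_scale[OF dl] lin_scale[OF pl] mems)
      also have "\<dots> = sL c (D n x)" unfolding D_def
        by (rule vector_space.vector_space_assms(1)[OF vL, symmetric])
      finally show "D n (sL c x) = sL c (D n x)" .
    qed
  qed
  have ccD: "cochain_complex sL L D"
    unfolding cochain_complex_def using vL Ls DLl DD by blast
  have cmi: "cochain_map sL L D sM M E i"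
    unfolding cochain_map_def using il iD by blast
  have cmp: "cochain_map sM M E sL L D p"
    unfolding cochain_map_def using pl pE by blast
  have key: "\<And>n z. z \<in> L n \<Longrightarrow> i n z = 0 \<Longrightarrow> bL n z = 0 \<Longrightarrow> z \<in> D (n - 1) ` L (n - 1)"
  proof -
    fix n z assume z: "z \<in> L n" and iz: "i n z = 0" and bz: "bL n z = 0"
    have "i n z \<in> bM (n - 1) ` M (n - 1)"
    proof (rule image_eqI[OF _ M0])
      show "i n z = bM (n - 1) 0" using iz bM0 by simp
    qed
    then have "z \<in> bL (n - 1) ` L (n - 1)" using qia z bz by blast
    then obtain w where w: "w \<in> L (n - 1)" and zw: "z = bL (n - 1) w" by blast
    have iw: "i (n - 1) w \<in> M (n - 1)" using w mems by blast
    have piw: "p (n - 1) (i (n - 1) w) \<in> L (n - 1)" using iw mems by blast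
    define w' where "w' = w - p (n - 1) (i (n - 1) w)"
    have w'L: "w' \<in> L (n - 1)" unfolding w'_def using Ldiff w piw .
    have iw': "i (n - 1) w' = 0"
      unfolding w'_def using lin_diff[OF il w piw Ldiff[OF w piw]] ipn[OF iw] by simp
    have "bL (n - 1) (p (n - 1) (i (n - 1) w)) = p (n - 1 + 1) (bM (n - 1) (i (n - 1) w))"
      using pc[OF iw] by simp
    also have "\<dots> = p (n - 1 + 1) (i (n - 1 + 1) (bL (n - 1) w))" using ic[OF w] by simp
    also have "\<dots> = 0" using zw iz p0 by simp
    finally have bpiw: "bL (n - 1) (p (n - 1) (i (n - 1) w)) = 0" .
    have "D (n - 1) w' = bL (n - 1) w'" unfolding D_def using iw' d0 p0 by simp
    also have "\<dots> = z" unfolding w'_def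
      using lin_diff[OF bLl w piw Ldiff[OF w piw]] bpiw zw by simp
    finally have "D (n - 1) w' = z" .
    then show "z \<in> D (n - 1) ` L (n - 1)" using w'L by blast
  qed
  have Dz: "\<And>n z. z \<in> L n \<Longrightarrow> i n z = 0 \<Longrightarrow> D n z = bL n z"
    unfolding D_def using d0 p0 by simp
  have DLm: "\<And>n x. x \<in> L (n - 1) \<Longrightarrow> D (n - 1) x \<in> L n" by (frule DL) simp
  have EMm: "\<And>n x. x \<in> M (n - 1) \<Longrightarrow> E (n - 1) x \<in> M n" by (frule EM) simp
  have pEm: "\<And>n y. y \<in> M (n - 1) \<Longrightarrow> p n (E (n - 1) y) = D (n - 1) (p (n - 1) y)"
    by (frule pE) simp
  have iDm: "\<And>n x. x \<in> L (n - 1) \<Longrightarrow> i n (D (n - 1) x) = E (n - 1) (i (n - 1) x)"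
    by (frule iD) simp
  have ci: "\<And>n. cohom_iso L D M E i n"
    unfolding cohom_iso_def
  proof (intro conjI ballI impI)
    fix n x assume x: "x \<in> L n" and Dx: "D n x = 0" and "i n x \<in> E (n - 1) ` M (n - 1)"
    then obtain y' where y': "y' \<in> M (n - 1)" and ixy: "i n x = E (n - 1) y'" by blast
    define x' where "x' = p (n - 1) y'"
    have x'L: "x' \<in> L (n - 1)" unfolding x'_def using y' mems by blast
    have Dx': "D (n - 1) x' = p n (i n x)" unfolding x'_def using pEm[OF y'] ixy by simp
    have Dx'L: "D (n - 1) x' \<in> L n" using DLm[OF x'L] .
    define z where "z = x - D (n - 1) x'"
    have zL: "z \<in> L n" unfolding z_def using Ldiff x Dx'L .
    have ix: "i n x \<in> M n" using x mems by blast
    have iz: "i n z = 0" unfolding z_def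
      using lin_diff[OF il x Dx'L Ldiff[OF x Dx'L]] Dx' ipn[OF ix] by simp
    have DDx': "D n (D (n - 1) x') = 0" using DD[OF x'L] by simp
    have "D n z = D n x - D n (D (n - 1) x')" unfolding z_def
      using lin_diff[OF DLl x Dx'L Ldiff[OF x Dx'L]] .
    then have "D n z = 0" using Dx DDx' by simp
    then have bz: "bL n z = 0" using Dz[OF zL iz] by simp
    obtain w where w: "w \<in> L (n - 1)" and zw: "z = D (n - 1) w" using key[OF zL iz bz] by blast
    have "x = D (n - 1) (x' + w)"
    proof -
      have "x = D (n - 1) x' + D (n - 1) w" using zw unfolding z_def by (metis diff_add_cancel add.commute)
      then show ?thesis using lin_add[OF DLl x'L w] by simp
    qed
    then show "x \<in> D (n - 1) ` L (n - 1)" using Ladd[OF x'L w] by blast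
  next
    fix n y assume y: "y \<in> M n" and Ey: "E n y = 0"
    have py: "p n y \<in> L n" using y mems by blast
    have "D n (p n y) = 0" using pE[OF y] Ey p0 by simp
    moreover have "y - i n (p n y) \<in> E (n - 1) ` M (n - 1)"
    proof (rule image_eqI[OF _ M0])
      show "y - i n (p n y) = E (n - 1) 0" using ipn[OF y] by (simp add: E_def bM0 d0)
    qed
    ultimately show "\<exists>x\<in>L n. D n x = 0 \<and> y - i n x \<in> E (n - 1) ` M (n - 1)" using py by blast
  qed
  have cp: "\<And>n. cohom_iso M E L D p n"
    unfolding cohom_iso_def
  proof (intro conjI ballI impI)
    fix n y assume y: "y \<in> M n" and "E n y = 0" and "p n y \<in> D (n - 1) ` L (n - 1)"
    then obtain x' where x': "x' \<in> L (n - 1)" and pyx: "p n y = D (n - 1) x'" by blast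
    have "y = E (n - 1) (i (n - 1) x')" using ipn[OF y] pyx iDm[OF x'] by simp
    moreover have "i (n - 1) x' \<in> M (n - 1)" using x' mems by blast
    ultimately show "y \<in> E (n - 1) ` M (n - 1)" by blast
  next
    fix n x assume x: "x \<in> L n" and Dx: "D n x = 0"
    have ix: "i n x \<in> M n" using x mems by blast
    have Eix: "E n (i n x) = 0" using iD[OF x] Dx i0 by simp
    have pix: "p n (i n x) \<in> L n" using ix mems by blast
    define z where "z = x - p n (i n x)"
    have zL: "z \<in> L n" unfolding z_def using Ldiff x pix .
    have iz: "i n z = 0" unfolding z_def
      using lin_diff[OF il x pix Ldiff[OF x pix]] ipn[OF ix] by simp
    have "D n z = D n x - D n (p n (i n x))" unfolding z_def
      using lin_diff[OF DLl x pix Ldiff[OF x pix]] .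
    also have "\<dots> = 0" using Dx pE[OF ix] Eix p0 by simp
    finally have "bL n z = 0" using Dz[OF zL iz] by simp
    then have "z \<in> D (n - 1) ` L (n - 1)" using key[OF zL iz] by blast
    then show "\<exists>ya\<in>M n. E n ya = 0 \<and> x - p n ya \<in> D (n - 1) ` L (n - 1)"
      using ix Eix unfolding z_def by blast
  qed
  have "cochain_complex sL L D \<and> quasi_iso sL L D sM M E i \<and> quasi_iso sM M E sL L D p
       \<and> (\<forall>n. \<forall>y\<in>M n. i n (p n y) = y)"
    unfolding quasi_iso_def using ccD cmi cmp ci cp ip by blast
  then show ?thesis unfolding D_def E_def .
qed

end
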